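(* Let $\mathcal{H}$ be a $d$-dimensional Hilbert space with orthonormal basis $\{|1\rangle,\dots,|d\rangle\}$ and let $0\le n\le d$. Define $A_n:\mathcal{H}^{\otimes n}\to\mathcal{H}^{\otimes d-n}$ by $$A_n=\frac{1}{\sqrt{(d-n)!\,n!}}\sum_{\sigma\in S_d}\operatorname{sgn}(\sigma)\,|\sigma_{n+1},\dots,\sigma_d\rangle\langle\sigma_1,\dots,\sigma_n|,$$ where $S_d$ is the symmetric group on $\{1,\dots,d\}$. Let $\mathcal{E}:\mathcal{B}(\mathcal{H}^{\otimes n})\to\mathcal{B}(\mathcal{H}^{\otimes d-n})$ be a completely positive trace-preserving map having $A_n$ as one of its Kraus operators, and $\mathcal{D}:\mathcal{B}(\mathcal{H}^{\otimes d-n})\to\mathcal{B}(\mathcal{H}^{\otimes n})$ a completely positive trace-preserving map having $A_n^\dagger$ as one of its Kraus operators. Then for every unitary $U$ on $\mathcal{H}$ and every density operator $\rho$ supported on the antisymmetric subspace of $\mathcal{H}^{\otimes n}$, $$\mathcal{D}\big(U^{\otimes d-n}\,\mathcal{E}(\rho)\,U^{\dagger\otimes d-n}\big)=U^{*\otimes n}\rho\,(U^{*\dagger})^{\otimes n},$$ where $U^*$ is the entrywise complex conjugate of $U$ in the basis $\{|i\rangle\}$.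
   Context: The antisymmetric subspace of $\mathcal{H}^{\otimes m}$ is the subspace of vectors $v$ with $P_\pi v=\operatorname{sgn}(\pi)v$ for every permutation $P_\pi$ of the tensor factors. *)

theory Defs
  imports Complex_Main "HOL-Combinatorics.Permutations"
begin

text \<open>Basis of H^{(x) m} for dim H = d: tuples (lists) of length m with entries in {0..<d}
  (basis vector |i> of H is indexed by i-1).  Operators between tensor powers are
  represented by their matrix entries in this product basis; only entries with indices in
  the relevant index sets are meaningful.\<close>

type_synonym qop = "nat list \<Rightarrow> nat list \<Rightarrow> complex"
type_synonym qvec = "nat list \<Rightarrow> complex"

definition tup :: "nat \<Rightarrow> nat \<Rightarrow> nat list set" where
  "tup d m = {xs. length xs = m \<and> set xs \<subseteq> {..<d}}"

definition mmul :: "nat list set \<Rightarrow> qop \<Rightarrow> qop \<Rightarrow> qop" where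
  "mmul T X Y = (\<lambda>i k. \<Sum>j\<in>T. X i j * Y j k)"

definition adj :: "qop \<Rightarrow> qop" where
  "adj X = (\<lambda>i j. cnj (X j i))"

definition apply_op :: "nat list set \<Rightarrow> qop \<Rightarrow> qvec \<Rightarrow> qvec" where
  "apply_op T X v = (\<lambda>i. \<Sum>j\<in>T. X i j * v j)"

definition tpow :: "(nat \<Rightarrow> nat \<Rightarrow> complex) \<Rightarrow> qop" where
  "tpow U = (\<lambda>i j. \<Prod>k<length i. U (i ! k) (j ! k))"

definition conj_mat :: "(nat \<Rightarrow> nat \<Rightarrow> complex) \<Rightarrow> nat \<Rightarrow> nat \<Rightarrow> complex" where
  "conj_mat U = (\<lambda>a b. cnj (U a b))"

definition unitary_mat :: "nat \<Rightarrow> (nat \<Rightarrow> nat \<Rightarrow> complex) \<Rightarrow> bool" where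
  "unitary_mat d U \<longleftrightarrow>
     (\<forall>i<d. \<forall>j<d. (\<Sum>k<d. cnj (U k i) * U k j) = (if i = j then 1 else 0))"

definition A_op :: "nat \<Rightarrow> nat \<Rightarrow> qop" where
  "A_op d n = (\<lambda>i k. complex_of_real (1 / sqrt (real (fact (d - n) * fact n))) *
     (\<Sum>\<sigma>\<in>{\<sigma>. \<sigma> permutes {..<d}}.
        if map \<sigma> [n..<d] = i \<and> map \<sigma> [0..<n] = k then of_int (sign \<sigma>) else 0))"

definition perm_factors :: "(nat \<Rightarrow> nat) \<Rightarrow> nat list \<Rightarrow> nat list" where
  "perm_factors \<pi> i = map (\<lambda>k. i ! \<pi> k) [0..<length i]"

definition antisym_vec :: "nat \<Rightarrow> nat \<Rightarrow> qvec \<Rightarrow> bool" where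
  "antisym_vec d m v \<longleftrightarrow>
     (\<forall>\<pi>. \<pi> permutes {..<m} \<longrightarrow>
        (\<forall>i\<in>tup d m. v (perm_factors \<pi> i) = of_int (sign \<pi>) * v i))"

definition supported_on_antisym :: "nat \<Rightarrow> nat \<Rightarrow> qop \<Rightarrow> bool" where
  "supported_on_antisym d m \<rho> \<longleftrightarrow> (\<forall>v. antisym_vec d m (apply_op (tup d m) \<rho> v))"

definition density_op :: "nat \<Rightarrow> nat \<Rightarrow> qop \<Rightarrow> bool" where
  "density_op d m \<rho> \<longleftrightarrow>
     (\<forall>v. (\<Sum>i\<in>tup d m. \<Sum>j\<in>tup d m. cnj (v i) * \<rho> i j * v j) \<in> \<real> \<and>
          0 \<le> Re (\<Sum>i\<in>tup d m. \<Sum>j\<in>tup d m. cnj (v i) * \<rho> i j * v j)) \<and>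
     (\<Sum>i\<in>tup d m. \<rho> i i) = 1"

definition kraus_rep :: "nat list set \<Rightarrow> nat list set \<Rightarrow> (nat \<Rightarrow> qop) \<Rightarrow> nat \<Rightarrow> (qop \<Rightarrow> qop) \<Rightarrow> bool" where
  "kraus_rep Tin Tout K r \<Phi> \<longleftrightarrow>
     (\<forall>a\<in>Tin. \<forall>b\<in>Tin. (\<Sum>l<r. mmul Tout (adj (K l)) (K l) a b) = (if a = b then 1 else 0)) \<and>
     (\<forall>X. \<forall>i\<in>Tout. \<forall>j\<in>Tout.
        \<Phi> X i j = (\<Sum>l<r. mmul Tin (mmul Tin (K l) X) (adj (K l)) i j))"

definition cptp_with_kraus :: "nat list set \<Rightarrow> nat list set \<Rightarrow> (qop \<Rightarrow> qop) \<Rightarrow> qop \<Rightarrow> bool" where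
  "cptp_with_kraus Tin Tout \<Phi> B \<longleftrightarrow>
     (\<exists>K r. kraus_rep Tin Tout K r \<Phi> \<and> (\<exists>l<r. \<forall>i\<in>Tout. \<forall>a\<in>Tin. K l i a = B i a))"

end

theory Submission
  imports Defs "Jordan_Normal_Form.Determinant" "HOL-Combinatorics.Multiset_Permutations"
begin


lemma finite_tup[simp]: "finite (tup d m)"
  unfolding tup_def using finite_lists_length_eq[of "{..<d}" m] by (simp add: conj_commute)

lemma tup_length: "i \<in> tup d m \<Longrightarrow> length i = m"
  by (simp add: tup_def)

lemma pf_length[simp]: "length (perm_factors \<pi> i) = length i"
  by (simp add: perm_factors_def)

lemma pf_nth[simp]: "t < length i \<Longrightarrow> perm_factors \<pi> i ! t = i ! \<pi> t"
  by (simp add: perm_factors_def)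

lemma pf_tup:
  assumes "\<pi> permutes {..<m}" "i \<in> tup d m"
  shows "perm_factors \<pi> i \<in> tup d m"
proof -
  have len: "length i = m" using assms(2) by (simp add: tup_def)
  have "set (perm_factors \<pi> i) \<subseteq> {..<d}"
  proof
    fix x assume "x \<in> set (perm_factors \<pi> i)"
    then obtain t where t: "t < m" "x = i ! \<pi> t" using len by (auto simp: in_set_conv_nth)
    have "\<pi> t < m" using permutes_in_image[OF assms(1)] t by auto
    then have "i ! \<pi> t \<in> set i" using len by auto
    then show "x \<in> {..<d}" using assms(2) t by (auto simp: tup_def)
  qed
  then show ?thesis using len by (simp add: tup_def)
qed

lemma pf_inv:
  assumes "\<pi> permutes {..<m}" "length i = m"
  shows "perm_factors (Hilbert_Choice.inv \<pi>) (perm_factors \<pi> i) = i"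
proof (rule nth_equalityI)
  show "length (perm_factors (Hilbert_Choice.inv \<pi>) (perm_factors \<pi> i)) = length i" by simp
  fix t assume "t < length (perm_factors (Hilbert_Choice.inv \<pi>) (perm_factors \<pi> i))"
  then have t: "t < m" using assms by simp
  have "Hilbert_Choice.inv \<pi> t < m" using permutes_in_image[OF permutes_inv[OF assms(1)]] t by auto
  then show "perm_factors (Hilbert_Choice.inv \<pi>) (perm_factors \<pi> i) ! t = i ! t"
    using t assms by (simp add: permutes_inverses)
qed

lemma pf_bij:
  assumes "\<pi> permutes {..<m}"
  shows "bij_betw (perm_factors \<pi>) (tup d m) (tup d m)"
proof (rule bij_betw_byWitness[where f'="perm_factors (Hilbert_Choice.inv \<pi>)"])
  have ip: "Hilbert_Choice.inv \<pi> permutes {..<m}" using permutes_inv[OF assms] .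
  show "\<forall>a\<in>tup d m. perm_factors (Hilbert_Choice.inv \<pi>) (perm_factors \<pi> a) = a"
    using pf_inv[OF assms] by (auto simp: tup_def)
  show "\<forall>a'\<in>tup d m. perm_factors \<pi> (perm_factors (Hilbert_Choice.inv \<pi>) a') = a'"
    using pf_inv[OF ip] permutes_inv_inv[OF assms] by (auto simp: tup_def)
  show "perm_factors \<pi> ` tup d m \<subseteq> tup d m" using pf_tup[OF assms] by auto
  show "perm_factors (Hilbert_Choice.inv \<pi>) ` tup d m \<subseteq> tup d m" using pf_tup[OF ip] by auto
qed

lemma antisym_zero:
  assumes "antisym_vec d m x" "k \<in> tup d m" "\<not> distinct k"
  shows "x k = 0"
proof -
  have len: "length k = m" using assms(2) by (simp add: tup_def)
  obtain p q where pq: "p < m" "q < m" "p \<noteq> q" "k ! p = k ! q"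
    using assms(3) len by (auto simp: distinct_conv_nth)
  let ?\<pi> = "Transposition.transpose p q"
  have perm: "?\<pi> permutes {..<m}" using pq by (intro permutes_swap_id) auto
  have "perm_factors ?\<pi> k = k"
    by (rule nth_equalityI) (use pq len in \<open>auto simp: transpose_def\<close>)
  moreover have "sign ?\<pi> = -1" using pq by (simp add: sign_swap_id)
  ultimately have "x k = - x k" using assms(1) perm assms(2) unfolding antisym_vec_def by force
  then show ?thesis by simp
qed

definition eps :: "nat \<Rightarrow> nat list \<Rightarrow> int" where
  "eps d J = (\<Sum>\<sigma>\<in>{\<sigma>. \<sigma> permutes {..<d}}. if map \<sigma> [0..<d] = J then sign \<sigma> else 0)"

definition cA :: "nat \<Rightarrow> nat \<Rightarrow> complex" where
  "cA d n = complex_of_real (1 / sqrt (real (fact (d - n) * fact n)))"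

lemma A_eps:
  assumes "n \<le> d" "length k = n"
  shows "A_op d n i k = cA d n * of_int (eps d (k @ i))"
proof -
  have "\<And>\<sigma>. (map \<sigma> [n..<d] = i \<and> map \<sigma> [0..<n] = k) \<longleftrightarrow> map \<sigma> [0..<d] = k @ i"
  proof -
    fix \<sigma> :: "nat \<Rightarrow> nat"
    have "[0..<d] = [0..<n] @ [n..<d]" using assms(1) upt_add_eq_append[of 0 n "d-n"] by simp
    then have "map \<sigma> [0..<d] = map \<sigma> [0..<n] @ map \<sigma> [n..<d]" by simp
    then show "(map \<sigma> [n..<d] = i \<and> map \<sigma> [0..<n] = k) \<longleftrightarrow> map \<sigma> [0..<d] = k @ i"
      using assms(2) by auto
  qed
  note eq = this
  have "(\<Sum>\<sigma>\<in>{\<sigma>. \<sigma> permutes {..<d}}. if map \<sigma> [n..<d] = i \<and> map \<sigma> [0..<n] = k then of_int (sign \<sigma>) else (0::complex))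
      = of_int (eps d (k @ i))"
    unfolding eps_def of_int_sum by (rule sum.cong) (simp_all only: eq of_int_0 if_distrib, simp)
  then show ?thesis unfolding A_op_def cA_def by simp
qed

lemma perm_map_distinct:
  assumes "\<sigma> permutes {..<d}"
  shows "map \<sigma> [0..<d] \<in> permutations_of_set {..<d}"
proof -
  have "inj_on \<sigma> (set [0..<d])" using permutes_inj_on[OF assms] .
  moreover have "set (map \<sigma> [0..<d]) = {..<d}" using permutes_image[OF assms] by (simp add: atLeast0LessThan)
  ultimately show ?thesis by (auto simp: permutations_of_set_def distinct_map)
qed

lemma eps_nonzero:
  assumes "eps d J \<noteq> 0"
  shows "J \<in> permutations_of_set {..<d}"
proof -
  obtain \<sigma> where "\<sigma> permutes {..<d}" "map \<sigma> [0..<d] = J"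
  proof -
    obtain \<sigma> where "\<sigma> \<in> {\<sigma>. \<sigma> permutes {..<d}}" "(if map \<sigma> [0..<d] = J then sign \<sigma> else 0) \<noteq> 0"
      using sum.not_neutral_contains_not_neutral[OF assms[unfolded eps_def]] by blast
    then show ?thesis using that by (simp split: if_splits)
  qed
  then show ?thesis using perm_map_distinct by auto
qed

lemma perm_map_eq:
  assumes "\<sigma> permutes {..<d}" "\<tau> permutes {..<d}" "map \<sigma> [0..<d] = map \<tau> [0..<d]"
  shows "\<sigma> = \<tau>"
proof
  fix x show "\<sigma> x = \<tau> x"
  proof (cases "x < d")
    case True then show ?thesis using assms(3) by (simp add: map_eq_conv)
  next
    case False then show ?thesis using assms(1,2) by (simp add: permutes_not_in)
  qed
qed

lemma eps_perm:
  assumes "\<tau> permutes {..<d}"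
  shows "eps d (map \<tau> [0..<d]) = sign \<tau>"
proof -
  have "eps d (map \<tau> [0..<d]) = (\<Sum>\<sigma>\<in>{\<sigma>. \<sigma> permutes {..<d}}. if \<sigma> = \<tau> then sign \<sigma> else 0)"
    unfolding eps_def
    by (rule sum.cong) (use perm_map_eq assms in auto)
  also have "\<dots> = sign \<tau>" using assms by (simp add: sum.delta' finite_permutations)
  finally show ?thesis .
qed

lemma eps_exists:
  assumes "J \<in> permutations_of_set {..<d}"
  shows "\<exists>\<tau>. \<tau> permutes {..<d} \<and> J = map \<tau> [0..<d]"
proof -
  have dJ: "distinct J" and sJ: "set J = {..<d}" using assms by (auto simp: permutations_of_set_def)
  have len: "length J = d" using distinct_card[OF dJ] sJ by simp
  define \<tau> where "\<tau> = (\<lambda>t. if t < d then J ! t else t)"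
  have "inj_on \<tau> {..<d}" unfolding \<tau>_def inj_on_def using dJ len by (simp add: nth_eq_iff_index_eq)
  moreover have "\<tau> ` {..<d} = {..<d}"
  proof -
    have "\<tau> ` {..<d} = set J" unfolding \<tau>_def using len by (auto simp: set_conv_nth)
    then show ?thesis using sJ by simp
  qed
  ultimately have "bij_betw \<tau> {..<d} {..<d}" by (simp add: bij_betw_def)
  then have "\<tau> permutes {..<d}" by (rule bij_imp_permutes) (simp add: \<tau>_def)
  moreover have "J = map \<tau> [0..<d]" by (rule nth_equalityI) (use len in \<open>auto simp: \<tau>_def\<close>)
  ultimately show ?thesis by blast
qed

lemma eps_sq:
  assumes "J \<in> permutations_of_set {..<d}"
  shows "eps d J * eps d J = 1"
  using eps_exists[OF assms] eps_perm by auto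

lemma eps_pf:
  assumes "\<pi> permutes {..<d}" "J \<in> permutations_of_set {..<d}"
  shows "eps d (perm_factors \<pi> J) = sign \<pi> * eps d J"
proof -
  obtain \<tau> where t: "\<tau> permutes {..<d}" "J = map \<tau> [0..<d]" using eps_exists[OF assms(2)] by blast
  have "perm_factors \<pi> J = map (\<tau> \<circ> \<pi>) [0..<d]"
  proof (rule nth_equalityI)
    show "length (perm_factors \<pi> J) = length (map (\<tau> \<circ> \<pi>) [0..<d])" using t by simp
    fix s assume "s < length (perm_factors \<pi> J)"
    then have s: "s < d" using t by simp
    have "\<pi> s < d" using permutes_in_image[OF assms(1)] s by auto
    then show "perm_factors \<pi> J ! s = map (\<tau> \<circ> \<pi>) [0..<d] ! s" using s t by simp
  qed
  moreover have "\<tau> \<circ> \<pi> permutes {..<d}" using permutes_compose[OF assms(1) t(1)] .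
  ultimately have "eps d (perm_factors \<pi> J) = sign (\<tau> \<circ> \<pi>)" using eps_perm by simp
  also have "\<dots> = sign \<tau> * sign \<pi>"
    by (rule sign_compose) (use t(1) assms(1) permutes_imp_permutation in auto)
  finally show ?thesis using t eps_perm by simp
qed



lemma pf_exists:
  assumes "distinct k" "distinct k'" "length k = n" "length k' = n" "set k' = set k"
  shows "\<exists>\<pi>. \<pi> permutes {..<n} \<and> k' = perm_factors \<pi> k"
proof -
  define ix where "ix y = (THE j. j < length k \<and> k ! j = y)" for y
  have ix: "ix y < length k \<and> k ! ix y = y" if "y \<in> set k" for y
    unfolding ix_def by (rule theI'[OF distinct_Ex1[OF assms(1) that]])
  define \<pi> where "\<pi> = (\<lambda>t. if t < n then ix (k' ! t) else t)"
  have inn: "\<And>t. t < n \<Longrightarrow> k' ! t \<in> set k" using assms(4,5) nth_mem by (metis)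
  have img: "\<pi> ` {..<n} \<subseteq> {..<n}" using inn ix assms(3) by (auto simp: \<pi>_def)
  have inj: "inj_on \<pi> {..<n}"
  proof (rule inj_onI)
    fix s t assume st: "s \<in> {..<n}" "t \<in> {..<n}" "\<pi> s = \<pi> t"
    then have "ix (k' ! s) = ix (k' ! t)" by (simp add: \<pi>_def)
    then have "k' ! s = k' ! t" using inn st ix by (metis lessThan_iff)
    then show "s = t" using assms(2,4) st by (simp add: nth_eq_iff_index_eq)
  qed
  have "\<pi> ` {..<n} = {..<n}" using endo_inj_surj[OF _ img inj] by simp
  then have "bij_betw \<pi> {..<n} {..<n}" using inj by (simp add: bij_betw_def)
  then have p: "\<pi> permutes {..<n}" by (rule bij_imp_permutes) (simp add: \<pi>_def)
  have "k' = perm_factors \<pi> k"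
  proof (rule nth_equalityI)
    show "length k' = length (perm_factors \<pi> k)" using assms by simp
    fix t assume "t < length k'"
    then have t: "t < n" using assms by simp
    then show "k' ! t = perm_factors \<pi> k ! t" using assms(3) inn[OF t] ix[OF inn[OF t]] by (simp add: \<pi>_def)
  qed
  then show ?thesis using p by blast
qed

lemma pf_append:
  assumes "\<pi> permutes {..<n}" "length k = n"
  shows "perm_factors \<pi> (k @ i) = perm_factors \<pi> k @ i"
proof (rule nth_equalityI)
  show "length (perm_factors \<pi> (k @ i)) = length (perm_factors \<pi> k @ i)" by simp
  fix t assume "t < length (perm_factors \<pi> (k @ i))"
  then have t: "t < n + length i" using assms by simp
  show "perm_factors \<pi> (k @ i) ! t = (perm_factors \<pi> k @ i) ! t"
  proof (cases "t < n")
    case True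
    then have "\<pi> t < n" using permutes_in_image[OF assms(1)] by auto
    then show ?thesis using True t assms by (simp add: nth_append)
  next
    case False
    then have "\<pi> t = t" using permutes_not_in[OF assms(1)] by auto
    then show ?thesis using False t assms by (simp add: nth_append)
  qed
qed

lemma cA_sq: "cA d n * cA d n = 1 / of_nat (fact (d - n) * fact n)"
proof -
  have pos: "real (fact (d - n) * fact n) > 0" by simp
  define r where "r = real (fact (d - n) * fact n)"
  have rp: "r > 0" using pos r_def by simp
  have "(1 / sqrt r) * (1 / sqrt r) = 1 / r"
    using rp by (simp add: field_simps)
  then have "cA d n * cA d n = complex_of_real (1 / r)"
    unfolding cA_def r_def[symmetric] by (metis of_real_mult)
  then show ?thesis unfolding r_def by simp
qed

lemma cA_cnj[simp]: "cnj (cA d n) = cA d n"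
  by (simp add: cA_def)

lemma N1:
  assumes nd: "n \<le> d" and ax: "antisym_vec d n x" and k: "k \<in> tup d n"
  shows "(\<Sum>k'\<in>tup d n. mmul (tup d (d-n)) (adj (A_op d n)) (A_op d n) k k' * x k') = x k"
proof -
  let ?T = "tup d n" and ?S = "tup d (d-n)" and ?c = "cA d n"
  let ?e = "\<lambda>J. (of_int (eps d J) :: complex)"
  define G where "G i = (\<Sum>k'\<in>?T. ?e (k' @ i) * x k')" for i
  have lk: "length k = n" using k by (simp add: tup_def)
  have "(\<Sum>k'\<in>?T. mmul ?S (adj (A_op d n)) (A_op d n) k k' * x k')
      = (\<Sum>k'\<in>?T. \<Sum>i\<in>?S. ?c * ?c * (?e (k @ i) * (?e (k' @ i) * x k')))"
    unfolding mmul_def adj_def sum_distrib_right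
    by (intro sum.cong refl) (simp add: A_eps[OF nd] tup_length lk)
  also have "\<dots> = ?c * ?c * (\<Sum>i\<in>?S. ?e (k @ i) * G i)"
    unfolding G_def sum_distrib_left by (subst sum.swap) simp
  finally have L: "(\<Sum>k'\<in>?T. mmul ?S (adj (A_op d n)) (A_op d n) k k' * x k')
      = ?c * ?c * (\<Sum>i\<in>?S. ?e (k @ i) * G i)" .
  show ?thesis
  proof (cases "distinct k")
    case False
    have "\<And>i. eps d (k @ i) = 0"
    proof (rule ccontr)
      fix i assume "eps d (k @ i) \<noteq> 0"
      then have "distinct (k @ i)" using permutations_of_setD(2)[OF eps_nonzero] by blast
      then show False using False by simp
    qed
    then show ?thesis using L antisym_zero[OF ax k False] by simp
  next
    case dk: True
    have sk: "set k \<subseteq> {..<d}" using k by (simp add: tup_def)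
    have ck: "card (set k) = n" using distinct_card[OF dk] lk by simp
    define Pc where "Pc = permutations_of_set ({..<d} - set k)"
    define Q where "Q = permutations_of_set (set k)"
    have QT: "Q \<subseteq> ?T"
    proof
      fix k' assume "k' \<in> Q"
      then have "distinct k'" "set k' = set k" by (auto simp: Q_def permutations_of_set_def)
      then have "length k' = n" using distinct_card ck by metis
      then show "k' \<in> ?T" using \<open>set k' = set k\<close> sk by (simp add: tup_def)
    qed
    have cQ: "card Q = fact n" unfolding Q_def using ck by simp
    have PcS: "Pc \<subseteq> ?S"
    proof
      fix i assume "i \<in> Pc"
      then have "distinct i" "set i = {..<d} - set k" by (auto simp: Pc_def permutations_of_set_def)
      moreover have "card ({..<d} - set k) = d - n" using card_Diff_subset[OF _ sk] ck by simp
      ultimately have "length i = d - n" using distinct_card by metis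
      then show "i \<in> ?S" using \<open>set i = {..<d} - set k\<close> by (simp add: tup_def)
    qed
    have cPc: "card Pc = fact (d - n)"
    proof -
      have "card ({..<d} - set k) = d - n" using card_Diff_subset[OF _ sk] ck by simp
      then show ?thesis unfolding Pc_def by simp
    qed
    have key: "?e (k @ i) * G i = (if i \<in> Pc then of_nat (fact n) * x k else 0)" if iS: "i \<in> ?S" for i
    proof (cases "k @ i \<in> permutations_of_set {..<d}")
      case False
      then have e0: "eps d (k @ i) = 0" using eps_nonzero by blast
      have "i \<notin> Pc"
      proof
        assume "i \<in> Pc"
        then have "distinct i" "set i = {..<d} - set k" by (auto simp: Pc_def permutations_of_set_def)
        then have "k @ i \<in> permutations_of_set {..<d}" using dk sk by (auto simp: permutations_of_set_def)
        then show False using False by simp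
      qed
      then show ?thesis using e0 by simp
    next
      case True
      then have dki: "distinct (k @ i)" and ski: "set (k @ i) = {..<d}"
        by (auto simp: permutations_of_set_def)
      have iPc: "i \<in> Pc" using dki ski by (auto simp: Pc_def permutations_of_set_def)
      have "G i = (\<Sum>k'\<in>Q. ?e (k' @ i) * x k')"
        unfolding G_def
      proof (rule sum.mono_neutral_right[OF finite_tup QT])
        show "\<forall>k'\<in>?T - Q. ?e (k' @ i) * x k' = 0"
        proof
          fix k' assume k'd: "k' \<in> ?T - Q"
          have "eps d (k' @ i) = 0"
          proof (rule ccontr)
            assume "eps d (k' @ i) \<noteq> 0"
            then have pp: "k' @ i \<in> permutations_of_set {..<d}" by (rule eps_nonzero)
            have "distinct (k' @ i)" using permutations_of_setD(2)[OF pp] .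
            moreover have "set (k' @ i) = {..<d}" using permutations_of_setD(1)[OF pp] .
            ultimately have "distinct k'" "set k' = set k" using dki ski by auto
            then have "k' \<in> Q" by (simp add: Q_def permutations_of_set_def)
            then show False using k'd by simp
          qed
          then show "?e (k' @ i) * x k' = 0" by simp
        qed
      qed
      also have "\<dots> = (\<Sum>k'\<in>Q. ?e (k @ i) * x k)"
      proof (rule sum.cong[OF refl])
        fix k' assume "k' \<in> Q"
        then have dk': "distinct k'" and sk': "set k' = set k"
          by (auto simp: Q_def permutations_of_set_def)
        have lk': "length k' = n" using distinct_card[OF dk'] sk' ck by simp
        obtain \<pi> where p: "\<pi> permutes {..<n}" "k' = perm_factors \<pi> k"
          using pf_exists[OF dk dk' lk lk' sk'] by blast
        have pd: "\<pi> permutes {..<d}" using permutes_subset[OF p(1)] nd by auto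
        have "eps d (k' @ i) = sign \<pi> * eps d (k @ i)"
          using p(2) pf_append[OF p(1) lk] eps_pf[OF pd True] by simp
        moreover have "x k' = of_int (sign \<pi>) * x k" using ax p k unfolding antisym_vec_def by blast
        moreover have "(of_int (sign \<pi>) :: complex) * of_int (sign \<pi>) = 1"
          by (metis of_int_1 of_int_mult sign_idempotent)
        ultimately show "?e (k' @ i) * x k' = ?e (k @ i) * x k"
          by (simp add: algebra_simps)
      qed
      also have "\<dots> = of_nat (fact n) * (?e (k @ i) * x k)" using cQ by simp
      finally have "?e (k @ i) * G i = of_nat (fact n) * (?e (k @ i) * ?e (k @ i)) * x k"
        by (simp add: algebra_simps)
      also have "\<dots> = of_nat (fact n) * x k"
        using eps_sq[OF True] by (metis mult_1_right of_int_1 of_int_mult)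
      finally show ?thesis using iPc by simp
    qed
    have "(\<Sum>i\<in>?S. ?e (k @ i) * G i) = (\<Sum>i\<in>?S. if i \<in> Pc then of_nat (fact n) * x k else 0)"
      using key by (intro sum.cong) auto
    also have "\<dots> = (\<Sum>i\<in>?S \<inter> Pc. of_nat (fact n) * x k)"
      by (rule sum.inter_restrict[OF finite_tup, symmetric])
    also have "?S \<inter> Pc = Pc" using PcS by blast
    finally have "(\<Sum>i\<in>?S. ?e (k @ i) * G i) = of_nat (fact (d - n)) * (of_nat (fact n) * x k)"
      using cPc by simp
    then show ?thesis using L cA_sq[of d n] by (simp add: field_simps)
  qed
qed



lemma mmul_assoc:
  assumes "finite A" "finite B"
  shows "mmul B (mmul A X Y) Z = mmul A X (mmul B Y Z)"
  unfolding mmul_def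
proof (intro ext)
  fix i k
  show "(\<Sum>j\<in>B. (\<Sum>a\<in>A. X i a * Y a j) * Z j k) = (\<Sum>a\<in>A. X i a * (\<Sum>j\<in>B. Y a j * Z j k))"
    unfolding sum_distrib_left sum_distrib_right by (subst sum.swap) (simp add: mult.assoc)
qed

lemma adj_mmul: "adj (mmul A X Y) = mmul A (adj Y) (adj X)"
  unfolding adj_def mmul_def by (simp add: mult.commute)

lemma adj_adj[simp]: "adj (adj X) = X"
  unfolding adj_def by simp

lemma normA:
  assumes nd: "n \<le> d" and ax: "antisym_vec d n x"
  shows "(\<Sum>i\<in>tup d (d-n). cnj (\<Sum>k\<in>tup d n. A_op d n i k * x k) * (\<Sum>k\<in>tup d n. A_op d n i k * x k))
       = (\<Sum>k\<in>tup d n. cnj (x k) * x k)"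
proof -
  let ?T = "tup d n" and ?S = "tup d (d-n)" and ?A = "A_op d n"
  have "(\<Sum>i\<in>?S. cnj (\<Sum>k\<in>?T. ?A i k * x k) * (\<Sum>k\<in>?T. ?A i k * x k))
      = (\<Sum>i\<in>?S. \<Sum>k\<in>?T. \<Sum>k'\<in>?T. cnj (x k) * (cnj (?A i k) * ?A i k' * x k'))"
    unfolding cnj_sum sum_product by (intro sum.cong refl) (simp add: ac_simps)
  also have "\<dots> = (\<Sum>k\<in>?T. \<Sum>i\<in>?S. \<Sum>k'\<in>?T. cnj (x k) * (cnj (?A i k) * ?A i k' * x k'))"
    by (rule sum.swap)
  also have "\<dots> = (\<Sum>k\<in>?T. \<Sum>k'\<in>?T. \<Sum>i\<in>?S. cnj (x k) * (cnj (?A i k) * ?A i k' * x k'))"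
    by (intro sum.cong refl sum.swap)
  also have "\<dots> = (\<Sum>k\<in>?T. cnj (x k) * (\<Sum>k'\<in>?T. (\<Sum>i\<in>?S. cnj (?A i k) * ?A i k') * x k'))"
    unfolding sum_distrib_left sum_distrib_right by (simp only: mult.assoc)
  also have "\<dots> = (\<Sum>k\<in>?T. cnj (x k) * x k)"
  proof (rule sum.cong[OF refl])
    fix k assume k: "k \<in> ?T"
    show "cnj (x k) * (\<Sum>k'\<in>?T. (\<Sum>i\<in>?S. cnj (?A i k) * ?A i k') * x k') = cnj (x k) * x k"
      using N1[OF nd ax k] unfolding mmul_def adj_def by simp
  qed
  finally show ?thesis .
qed

lemma kill:
  fixes K :: "nat \<Rightarrow> qop" and r :: nat
  assumes fin: "finite Tin" "finite Tout"
    and kr: "\<forall>a\<in>Tin. \<forall>b\<in>Tin. (\<Sum>l<r. mmul Tout (adj (K l)) (K l) a b) = (if a = b then 1 else 0)"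
    and l0: "l0 < r" and KB: "\<forall>i\<in>Tout. \<forall>a\<in>Tin. K l0 i a = B i a"
    and nrm: "(\<Sum>i\<in>Tout. cnj (\<Sum>a\<in>Tin. B i a * x a) * (\<Sum>a\<in>Tin. B i a * x a)) = (\<Sum>a\<in>Tin. cnj (x a) * x a)"
    and l: "l < r" "l \<noteq> l0" and i: "i \<in> Tout"
  shows "(\<Sum>a\<in>Tin. K l i a * x a) = 0"
proof -
  define y where "y l i = (\<Sum>a\<in>Tin. K l i a * x a)" for l i
  define N where "N l = (\<Sum>i\<in>Tout. (norm (y l i))^2)" for l
  have Nc: "complex_of_real (N l) = (\<Sum>i\<in>Tout. cnj (y l i) * y l i)" for l
    unfolding N_def of_real_sum
  proof (intro sum.cong refl)
    fix i show "complex_of_real ((cmod (y l i))\<^sup>2) = cnj (y l i) * y l i"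
      using complex_norm_square[of "y l i"] by (simp add: mult.commute)
  qed
  have "(\<Sum>l<r. \<Sum>i\<in>Tout. cnj (y l i) * y l i)
      = (\<Sum>l<r. \<Sum>i\<in>Tout. \<Sum>a\<in>Tin. \<Sum>b\<in>Tin. cnj (x a) * x b * (cnj (K l i a) * K l i b))"
    unfolding y_def by (simp add: sum_distrib_left sum_distrib_right algebra_simps)
  also have "\<dots> = (\<Sum>a\<in>Tin. \<Sum>b\<in>Tin. cnj (x a) * x b * (\<Sum>l<r. mmul Tout (adj (K l)) (K l) a b))"
  proof -
    have "(\<Sum>l<r. \<Sum>i\<in>Tout. \<Sum>a\<in>Tin. \<Sum>b\<in>Tin. cnj (x a) * x b * (cnj (K l i a) * K l i b))
       = (\<Sum>l<r. \<Sum>a\<in>Tin. \<Sum>i\<in>Tout. \<Sum>b\<in>Tin. cnj (x a) * x b * (cnj (K l i a) * K l i b))"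
      by (intro sum.cong refl sum.swap)
    also have "\<dots> = (\<Sum>l<r. \<Sum>a\<in>Tin. \<Sum>b\<in>Tin. \<Sum>i\<in>Tout. cnj (x a) * x b * (cnj (K l i a) * K l i b))"
      by (intro sum.cong refl sum.swap)
    also have "\<dots> = (\<Sum>a\<in>Tin. \<Sum>l<r. \<Sum>b\<in>Tin. \<Sum>i\<in>Tout. cnj (x a) * x b * (cnj (K l i a) * K l i b))"
      by (rule sum.swap)
    also have "\<dots> = (\<Sum>a\<in>Tin. \<Sum>b\<in>Tin. \<Sum>l<r. \<Sum>i\<in>Tout. cnj (x a) * x b * (cnj (K l i a) * K l i b))"
      by (intro sum.cong refl sum.swap)
    also have "\<dots> = (\<Sum>a\<in>Tin. \<Sum>b\<in>Tin. cnj (x a) * x b * (\<Sum>l<r. mmul Tout (adj (K l)) (K l) a b))"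
      unfolding mmul_def adj_def sum_distrib_left by (simp only: mult.assoc)
    finally show ?thesis .
  qed
  also have "\<dots> = (\<Sum>a\<in>Tin. \<Sum>b\<in>Tin. if a = b then cnj (x a) * x b else 0)"
    using kr by (intro sum.cong refl) simp
  also have "\<dots> = (\<Sum>a\<in>Tin. cnj (x a) * x a)"
    using fin by (simp add: sum.delta)
  finally have tot: "(\<Sum>l<r. complex_of_real (N l)) = (\<Sum>a\<in>Tin. cnj (x a) * x a)"
    unfolding Nc .
  have "complex_of_real (N l0) = (\<Sum>a\<in>Tin. cnj (x a) * x a)"
    unfolding Nc y_def using KB nrm by (simp cong: sum.cong)
  with tot have "(\<Sum>l<r. complex_of_real (N l)) = complex_of_real (N l0)" by simp
  then have "(\<Sum>l<r. N l) = N l0" by (metis of_real_eq_iff of_real_sum)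
  moreover have "(\<Sum>l<r. N l) = N l0 + (\<Sum>l\<in>{..<r} - {l0}. N l)"
    by (rule sum.remove) (use l0 in simp_all)
  ultimately have z: "(\<Sum>l\<in>{..<r} - {l0}. N l) = 0" by simp
  have Nnn: "N l \<ge> 0" for l unfolding N_def by (simp add: sum_nonneg)
  have "N l = 0" using z sum_nonneg_eq_0_iff[of "{..<r} - {l0}" N] Nnn l by auto
  then have "(norm (y l i))^2 = 0" using sum_nonneg_eq_0_iff[of Tout "\<lambda>i. (norm (y l i))^2"] fin i
    unfolding N_def by auto
  then show ?thesis unfolding y_def by simp
qed



lemma tup_Suc: "tup d (Suc m) = (\<lambda>(a, j). a # j) ` ({..<d} \<times> tup d m)"
proof -
  have "xs \<in> tup d (Suc m) \<longleftrightarrow> xs \<in> (\<lambda>(a, j). a # j) ` ({..<d} \<times> tup d m)" for xs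
  proof (cases xs)
    case Nil then show ?thesis by (auto simp: tup_def)
  next
    case (Cons y ys)
    have "xs \<in> (\<lambda>(a, j). a # j) ` ({..<d} \<times> tup d m) \<longleftrightarrow> (y, ys) \<in> {..<d} \<times> tup d m"
      unfolding Cons by force
    then show ?thesis unfolding Cons by (auto simp: tup_def)
  qed
  then show ?thesis by blast
qed



lemma sum_prod_tup:
  fixes f :: "nat \<Rightarrow> nat \<Rightarrow> complex"
  shows "(\<Sum>j\<in>tup d m. \<Prod>t<m. f t (j ! t)) = (\<Prod>t<m. \<Sum>a<d. f t a)"
proof (induction m arbitrary: f)
  case 0
  have "tup d 0 = {[]}" by (auto simp: tup_def)
  then show ?case by simp
next
  case (Suc m)
  have inj: "inj_on (\<lambda>(a, j). a # j) ({..<d} \<times> tup d m)" by (auto simp: inj_on_def)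
  define F where "F j = (\<Prod>t<Suc m. f t (j ! t))" for j
  have "(\<Sum>j\<in>tup d (Suc m). F j) = (\<Sum>p\<in>{..<d} \<times> tup d m. F ((\<lambda>(a, j). a # j) p))"
    unfolding tup_Suc by (rule sum.reindex[OF inj, unfolded o_def])
  also have "\<dots> = (\<Sum>p\<in>{..<d} \<times> tup d m. case p of (a, j) \<Rightarrow> F (a # j))"
    by (rule sum.cong) (simp_all add: case_prod_beta)
  also have "\<dots> = (\<Sum>a<d. \<Sum>j\<in>tup d m. F (a # j))"
    by (rule sum.cartesian_product[symmetric])
  also have "\<dots> = (\<Sum>a<d. \<Sum>j\<in>tup d m. f 0 a * (\<Prod>t<m. f (Suc t) (j ! t)))"
    unfolding F_def by (simp only: prod.lessThan_Suc_shift nth_Cons_0 nth_Cons_Suc)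
  also have "\<dots> = (\<Sum>a<d. f 0 a * (\<Prod>t<m. \<Sum>a<d. f (Suc t) a))"
  proof -
    have IH': "(\<Sum>j\<in>tup d m. \<Prod>t<m. f (Suc t) (j ! t)) = (\<Prod>t<m. \<Sum>a<d. f (Suc t) a)"
      by (rule Suc.IH)
    show ?thesis
    proof (intro sum.cong refl)
      fix a
      have "(\<Sum>j\<in>tup d m. f 0 a * (\<Prod>t<m. f (Suc t) (j ! t))) = f 0 a * (\<Sum>j\<in>tup d m. \<Prod>t<m. f (Suc t) (j ! t))"
        by (rule sum_distrib_left[symmetric])
      then show "(\<Sum>j\<in>tup d m. f 0 a * (\<Prod>t<m. f (Suc t) (j ! t))) = f 0 a * (\<Prod>t<m. \<Sum>a<d. f (Suc t) a)"
        unfolding IH' .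
    qed
  qed
  also have "\<dots> = (\<Prod>t<Suc m. \<Sum>a<d. f t a)"
    by (simp only: prod.lessThan_Suc_shift sum_distrib_right)
  finally show ?case unfolding F_def .
qed



lemma VdV:
  assumes U: "unitary_mat d U" and b: "b \<in> tup d m" and b': "b' \<in> tup d m"
  shows "mmul (tup d m) (adj (tpow (conj_mat U))) (tpow (conj_mat U)) b b' = (if b = b' then 1 else 0)"
proof -
  have lb: "length b = m" "length b' = m" using b b' by (auto simp: tup_def)
  have sb: "set b \<subseteq> {..<d}" "set b' \<subseteq> {..<d}" using b b' by (auto simp: tup_def)
  have bd: "b ! t < d \<and> b' ! t < d" if "t < m" for t
  proof -
    have "b ! t \<in> set b" "b' ! t \<in> set b'" using that lb by simp_all
    then show ?thesis using sb by auto
  qed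
  have "mmul (tup d m) (adj (tpow (conj_mat U))) (tpow (conj_mat U)) b b'
      = (\<Sum>k\<in>tup d m. \<Prod>t<m. U (k ! t) (b ! t) * cnj (U (k ! t) (b' ! t)))"
    unfolding mmul_def adj_def tpow_def conj_mat_def
  proof (rule sum.cong[OF refl])
    fix k assume "k \<in> tup d m"
    then have lk: "length k = m" by (simp add: tup_def)
    show "cnj (\<Prod>t<length k. cnj (U (k ! t) (b ! t))) * (\<Prod>t<length k. cnj (U (k ! t) (b' ! t)))
        = (\<Prod>t<m. U (k ! t) (b ! t) * cnj (U (k ! t) (b' ! t)))"
      unfolding lk by (simp add: prod.distrib)
  qed
  also have "\<dots> = (\<Prod>t<m. \<Sum>a<d. U a (b ! t) * cnj (U a (b' ! t)))"
    by (rule sum_prod_tup)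
  also have "\<dots> = (\<Prod>t<m. if b ! t = b' ! t then 1 else 0)"
  proof (rule prod.cong[OF refl])
    fix t assume "t \<in> {..<m}"
    then have "b ! t < d" "b' ! t < d" using bd by auto
    then have "(\<Sum>a<d. cnj (U a (b' ! t)) * U a (b ! t)) = (if b' ! t = b ! t then 1 else 0)"
      using U[unfolded unitary_mat_def, rule_format, OF \<open>b' ! t < d\<close> \<open>b ! t < d\<close>] by simp
    then show "(\<Sum>a<d. U a (b ! t) * cnj (U a (b' ! t))) = (if b ! t = b' ! t then 1 else 0)"
      by (simp add: mult.commute eq_commute)
  qed
  also have "\<dots> = (if b = b' then 1 else 0)"
  proof (cases "b = b'")
    case True then show ?thesis by simp
  next
    case False
    have "\<exists>t<m. b ! t \<noteq> b' ! t"
    proof (rule ccontr)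
      assume "\<not> (\<exists>t<m. b ! t \<noteq> b' ! t)"
      then have "b = b'" using lb by (intro nth_equalityI) auto
      then show False using False by simp
    qed
    then obtain t where t: "t < m" "b ! t \<noteq> b' ! t" by blast
    have "(\<Prod>t<m. if b ! t = b' ! t then 1 else 0) = (0::complex)"
      by (rule prod_zero) (use t in auto)
    then show ?thesis using False by simp
  qed
  finally show ?thesis .
qed



lemma antisym_tpow:
  assumes ax: "antisym_vec d m x"
  shows "antisym_vec d m (apply_op (tup d m) (tpow g) x)"
  unfolding antisym_vec_def
proof (intro allI impI ballI)
  fix \<pi> i assume p: "\<pi> permutes {..<m}" and i: "i \<in> tup d m"
  have li: "length i = m" using i by (simp add: tup_def)
  have "apply_op (tup d m) (tpow g) x (perm_factors \<pi> i)
      = (\<Sum>j\<in>tup d m. tpow g (perm_factors \<pi> i) (perm_factors \<pi> j) * x (perm_factors \<pi> j))"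
    unfolding apply_op_def by (rule sum.reindex_bij_betw[OF pf_bij[OF p], symmetric])
  also have "\<dots> = (\<Sum>j\<in>tup d m. of_int (sign \<pi>) * (tpow g i j * x j))"
  proof (rule sum.cong[OF refl])
    fix j assume j: "j \<in> tup d m"
    have lj: "length j = m" using j by (simp add: tup_def)
    have "tpow g (perm_factors \<pi> i) (perm_factors \<pi> j) = (\<Prod>t<m. g (i ! \<pi> t) (j ! \<pi> t))"
      unfolding tpow_def using li lj by (intro prod.cong) auto
    also have "\<dots> = (\<Prod>t<m. g (i ! t) (j ! t))"
      by (rule prod.reindex_bij_betw[OF permutes_imp_bij[OF p]])
    also have "\<dots> = tpow g i j" unfolding tpow_def using li by simp
    finally show "tpow g (perm_factors \<pi> i) (perm_factors \<pi> j) * x (perm_factors \<pi> j)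
        = of_int (sign \<pi>) * (tpow g i j * x j)"
      using ax p j unfolding antisym_vec_def by simp
  qed
  also have "\<dots> = of_int (sign \<pi>) * apply_op (tup d m) (tpow g) x i"
    unfolding apply_op_def by (simp add: sum_distrib_left)
  finally show "apply_op (tup d m) (tpow g) x (perm_factors \<pi> i) = of_int (sign \<pi>) * apply_op (tup d m) (tpow g) x i" .
qed



lemma density_herm:
  assumes dens: "density_op d m \<rho>" and a: "a \<in> tup d m" and b: "b \<in> tup d m"
  shows "\<rho> a b = cnj (\<rho> b a)"
proof -
  let ?T = "tup d m"
  define q where "q v = (\<Sum>i\<in>?T. \<Sum>j\<in>?T. cnj (v i) * \<rho> i j * v j)" for v
  have real: "Im (q v) = 0" for v using dens unfolding density_op_def q_def
    by (simp add: complex_is_Real_iff)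
  show ?thesis
  proof (cases "a = b")
    case True
    define v where "v x = (if x = a then 1 else 0::complex)" for x
    have sub: "{a} \<subseteq> ?T" using a by auto
    have "q v = (\<Sum>i\<in>{a}. \<Sum>j\<in>?T. cnj (v i) * \<rho> i j * v j)"
      unfolding q_def by (rule sum.mono_neutral_right[OF finite_tup sub]) (auto simp: v_def)
    also have "\<dots> = (\<Sum>i\<in>{a}. \<Sum>j\<in>{a}. cnj (v i) * \<rho> i j * v j)"
      by (intro sum.cong refl sum.mono_neutral_right[OF finite_tup sub]) (auto simp: v_def)
    finally have "q v = \<rho> a a" by (simp add: v_def)
    then show ?thesis using real[of v] True by (simp add: complex_eq_iff)
  next
    case False
    have qab: "q v = cnj (v a) * \<rho> a a * v a + cnj (v a) * \<rho> a b * v b + cnj (v b) * \<rho> b a * v a + cnj (v b) * \<rho> b b * v b"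
      if vz: "\<And>x. x \<noteq> a \<Longrightarrow> x \<noteq> b \<Longrightarrow> v x = 0" for v
    proof -
      have sub: "{a, b} \<subseteq> ?T" using a b by auto
      have "q v = (\<Sum>i\<in>{a,b}. \<Sum>j\<in>?T. cnj (v i) * \<rho> i j * v j)"
        unfolding q_def by (rule sum.mono_neutral_right[OF finite_tup sub]) (auto simp: vz)
      also have "\<dots> = (\<Sum>i\<in>{a,b}. \<Sum>j\<in>{a,b}. cnj (v i) * \<rho> i j * v j)"
        by (intro sum.cong refl sum.mono_neutral_right[OF finite_tup sub]) (auto simp: vz)
      finally show ?thesis using False by (simp add: algebra_simps)
    qed
    have ii: "\<i> * x * \<i> = - x" for x :: complex
      by (metis complex_i_mult_minus mult.assoc mult.commute)
    define v1 where "v1 x = (if x = a then 1 else if x = b then 1 else 0::complex)" for x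
    define v2 where "v2 x = (if x = a then 1 else if x = b then \<i> else 0::complex)" for x
    define v3 where "v3 x = (if x = a then 1 else 0::complex)" for x
    define v4 where "v4 x = (if x = b then 1 else 0::complex)" for x
    have "q v1 = \<rho> a a + \<rho> a b + \<rho> b a + \<rho> b b" using qab[of v1] False by (simp add: v1_def)
    moreover have "q v2 = \<rho> a a + \<rho> a b * \<i> - \<i> * \<rho> b a + \<rho> b b" using qab[of v2] False by (simp add: v2_def ii)
    moreover have "q v3 = \<rho> a a" using qab[of v3] False by (simp add: v3_def)
    moreover have "q v4 = \<rho> b b" using qab[of v4] False by (simp add: v4_def)
    ultimately have "Im (\<rho> a b) + Im (\<rho> b a) = 0" "Re (\<rho> a b) - Re (\<rho> b a) = 0"
      using real[of v1] real[of v2] real[of v3] real[of v4] by simp_all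
    then show ?thesis by (simp add: complex_eq_iff)
  qed
qed



lemma prod_split_add:
  fixes g :: "nat \<Rightarrow> complex"
  shows "(\<Prod>t<n+m. g t) = (\<Prod>t<n. g t) * (\<Prod>t<m. g (n + t))"
  by (induction m) (simp_all add: ac_simps)

lemma perm_map_tup:
  assumes "\<sigma> permutes {..<d}"
  shows "map \<sigma> [0..<d] \<in> tup d d"
  using permutations_of_setD(1)[OF perm_map_distinct[OF assms]] by (simp add: tup_def)

lemma eps_sum:
  fixes h :: "nat list \<Rightarrow> complex"
  shows "(\<Sum>J\<in>tup d d. of_int (eps d J) * h J)
       = (\<Sum>\<sigma>\<in>{\<sigma>. \<sigma> permutes {..<d}}. of_int (sign \<sigma>) * h (map \<sigma> [0..<d]))"
proof -
  have "(\<Sum>J\<in>tup d d. of_int (eps d J) * h J)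
      = (\<Sum>J\<in>tup d d. \<Sum>\<sigma>\<in>{\<sigma>. \<sigma> permutes {..<d}}. if map \<sigma> [0..<d] = J then of_int (sign \<sigma>) * h J else 0)"
    unfolding eps_def of_int_sum sum_distrib_right
    by (intro sum.cong refl) simp
  also have "\<dots> = (\<Sum>\<sigma>\<in>{\<sigma>. \<sigma> permutes {..<d}}. \<Sum>J\<in>tup d d. if map \<sigma> [0..<d] = J then of_int (sign \<sigma>) * h J else 0)"
    by (rule sum.swap)
  also have "\<dots> = (\<Sum>\<sigma>\<in>{\<sigma>. \<sigma> permutes {..<d}}. of_int (sign \<sigma>) * h (map \<sigma> [0..<d]))"
  proof (rule sum.cong[OF refl])
    fix \<sigma> assume "\<sigma> \<in> {\<sigma>. \<sigma> permutes {..<d}}"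
    then have "map \<sigma> [0..<d] \<in> tup d d" using perm_map_tup by auto
    then show "(\<Sum>J\<in>tup d d. if map \<sigma> [0..<d] = J then of_int (sign \<sigma>) * h J else 0) = of_int (sign \<sigma>) * h (map \<sigma> [0..<d])"
      by (simp add: sum.delta)
  qed
  finally show ?thesis .
qed

definition Umat :: "nat \<Rightarrow> (nat \<Rightarrow> nat \<Rightarrow> complex) \<Rightarrow> complex mat" where
  "Umat d U = mat d d (\<lambda>(a, b). U a b)"

lemma F_det:
  assumes L: "L \<in> tup d d"
  shows "(\<Sum>\<sigma>\<in>{\<sigma>. \<sigma> permutes {..<d}}. of_int (sign \<sigma>) * (\<Prod>t<d. U (L ! t) (\<sigma> t)))
       = of_int (eps d L) * det (Umat d U)"
proof -
  let ?M = "mat d d (\<lambda>(t, s). U (L ! t) s)"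
  have lL: "length L = d" and sL: "set L \<subseteq> {..<d}" using L by (auto simp: tup_def)
  have "det ?M = (\<Sum>p\<in>{p. p permutes {0..<d}}. signof p * (\<Prod>i = 0..<d. ?M $$ (i, p i)))"
    by (rule det_def') simp
  also have "\<dots> = (\<Sum>\<sigma>\<in>{\<sigma>. \<sigma> permutes {..<d}}. of_int (sign \<sigma>) * (\<Prod>t<d. U (L ! t) (\<sigma> t)))"
    unfolding atLeast0LessThan
  proof (rule sum.cong[OF refl])
    fix p assume p: "p \<in> {p. p permutes {..<d}}"
    have "(\<Prod>i\<in>{..<d}. ?M $$ (i, p i)) = (\<Prod>t<d. U (L ! t) (p t))"
    proof (rule prod.cong[OF refl])
      fix i assume i: "i \<in> {..<d}"
      then have "p i < d" using permutes_in_image[of p "{..<d}"] p by auto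
      then show "?M $$ (i, p i) = U (L ! i) (p i)" using i by simp
    qed
    then show "signof p * (\<Prod>i\<in>{..<d}. ?M $$ (i, p i)) = of_int (sign p) * (\<Prod>t<d. U (L ! t) (p t))"
      by simp
  qed
  finally have D: "(\<Sum>\<sigma>\<in>{\<sigma>. \<sigma> permutes {..<d}}. of_int (sign \<sigma>) * (\<Prod>t<d. U (L ! t) (\<sigma> t))) = det ?M" by simp
  show ?thesis
  proof (cases "L \<in> permutations_of_set {..<d}")
    case True
    obtain \<tau> where t: "\<tau> permutes {..<d}" "L = map \<tau> [0..<d]" using eps_exists[OF True] by blast
    have tl: "\<And>i. i < d \<Longrightarrow> \<tau> i < d" using permutes_in_image[OF t(1)] by auto
    have "?M = mat d d (\<lambda>(i, j). Umat d U $$ (\<tau> i, j))"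
      by (rule eq_matI) (simp_all add: t(2) tl Umat_def)
    moreover have "\<tau> permutes {0..<d}" using t(1) by (simp add: atLeast0LessThan)
    ultimately have "det ?M = signof \<tau> * det (Umat d U)"
      using det_permute_rows[of "Umat d U" d \<tau>] by (simp add: Umat_def)
    then show ?thesis using D t eps_perm by simp
  next
    case False
    have e0: "eps d L = 0" using eps_nonzero False by blast
    have nd: "\<not> distinct L"
    proof
      assume dL: "distinct L"
      have "card (set L) = card {..<d}" using distinct_card[OF dL] lL by simp
      then have "set L = {..<d}" using card_subset_eq[OF _ sL] by simp
      then show False using False dL by (simp add: permutations_of_set_def)
    qed
    obtain p q where pq: "p < d" "q < d" "p \<noteq> q" "L ! p = L ! q"
      using nd lL by (auto simp: distinct_conv_nth)
    have "row ?M p = row ?M q"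
      by (rule eq_vecI) (simp_all add: pq)
    then have "det ?M = 0" using det_identical_rows[of ?M d p q] pq by simp
    then show ?thesis using D e0 by simp
  qed
qed

lemma append_sum:
  fixes g :: "nat list \<Rightarrow> complex"
  assumes nd: "n \<le> d"
  shows "(\<Sum>k'\<in>tup d n. \<Sum>i'\<in>tup d (d-n). g (k' @ i')) = (\<Sum>J\<in>tup d d. g J)"
proof -
  have inj: "inj_on (\<lambda>(a, b). a @ b) (tup d n \<times> tup d (d-n))"
    by (auto simp: inj_on_def tup_def)
  have img: "(\<lambda>(a, b). a @ b) ` (tup d n \<times> tup d (d-n)) = tup d d"
  proof (intro equalityI subsetI)
      fix J assume "J \<in> (\<lambda>(a, b). a @ b) ` (tup d n \<times> tup d (d-n))"
      then show "J \<in> tup d d" using nd by (auto simp: tup_def)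
    next
      fix J assume J: "J \<in> tup d d"
      then have "take n J \<in> tup d n" "drop n J \<in> tup d (d-n)"
        using nd set_take_subset[of n J] set_drop_subset[of n J] by (auto simp: tup_def)
      moreover have "J = (\<lambda>(a, b). a @ b) (take n J, drop n J)" by simp
      ultimately show "J \<in> (\<lambda>(a, b). a @ b) ` (tup d n \<times> tup d (d-n))" by blast
  qed
  have "(\<Sum>k'\<in>tup d n. \<Sum>i'\<in>tup d (d-n). g (k' @ i')) = (\<Sum>p\<in>tup d n \<times> tup d (d-n). case p of (a, b) \<Rightarrow> g (a @ b))"
    by (rule sum.cartesian_product)
  also have "\<dots> = (\<Sum>p\<in>tup d n \<times> tup d (d-n). g ((\<lambda>(a, b). a @ b) p))"
    by (rule sum.cong) (simp_all add: case_prod_beta)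
  also have "\<dots> = (\<Sum>J\<in>tup d d. g J)"
    using sum.reindex[OF inj, of g, unfolded o_def] img by simp
  finally show ?thesis .
qed

lemma K0:
  assumes nd: "n \<le> d" and i: "i \<in> tup d (d-n)" and k: "k \<in> tup d n"
  shows "mmul (tup d n) (mmul (tup d (d-n)) (tpow U) (A_op d n)) (adj (tpow (conj_mat U))) i k
       = det (Umat d U) * A_op d n i k"
proof -
  let ?T = "tup d n" and ?S = "tup d (d-n)"
  have li: "length i = d - n" and lk: "length k = n" using i k by (auto simp: tup_def)
  let ?L = "k @ i"
  have Ld: "?L \<in> tup d d" using i k nd by (auto simp: tup_def)
  have "mmul ?T (mmul ?S (tpow U) (A_op d n)) (adj (tpow (conj_mat U))) i k
      = (\<Sum>k'\<in>?T. \<Sum>i'\<in>?S. cA d n * (of_int (eps d (k' @ i')) * (\<Prod>t<d. U (?L ! t) ((k' @ i') ! t))))"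
    unfolding mmul_def sum_distrib_right
  proof (intro sum.cong refl)
    fix k' i' assume k': "k' \<in> ?T" and i': "i' \<in> ?S"
    have lk': "length k' = n" and li': "length i' = d - n" using k' i' by (auto simp: tup_def)
    have P: "(\<Prod>t<d. U (?L ! t) ((k' @ i') ! t)) = (\<Prod>t<n. U (k ! t) (k' ! t)) * (\<Prod>t<d-n. U (i ! t) (i' ! t))"
      using prod_split_add[of "\<lambda>t. U (?L ! t) ((k' @ i') ! t)" n "d - n"] nd lk lk' by (simp add: nth_append)
    show "tpow U i i' * A_op d n i' k' * adj (tpow (conj_mat U)) k' k
        = cA d n * (of_int (eps d (k' @ i')) * (\<Prod>t<d. U (?L ! t) ((k' @ i') ! t)))"
      unfolding P A_eps[OF nd lk'] tpow_def adj_def conj_mat_def using li lk by simp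
  qed
  also have "\<dots> = cA d n * (\<Sum>k'\<in>?T. \<Sum>i'\<in>?S. of_int (eps d (k' @ i')) * (\<Prod>t<d. U (?L ! t) ((k' @ i') ! t)))"
    by (simp add: sum_distrib_left)
  also have "\<dots> = cA d n * (\<Sum>J\<in>tup d d. of_int (eps d J) * (\<Prod>t<d. U (?L ! t) (J ! t)))"
    using append_sum[OF nd, of "\<lambda>J. of_int (eps d J) * (\<Prod>t<d. U (?L ! t) (J ! t))"] by simp
  also have "\<dots> = cA d n * (\<Sum>\<sigma>\<in>{\<sigma>. \<sigma> permutes {..<d}}. of_int (sign \<sigma>) * (\<Prod>t<d. U (?L ! t) (\<sigma> t)))"
    unfolding eps_sum by simp
  also have "\<dots> = det (Umat d U) * A_op d n i k"
    unfolding F_det[OF Ld] A_eps[OF nd lk] by simp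
  finally show ?thesis .
qed

lemma det_unit:
  assumes U: "unitary_mat d U"
  shows "cnj (det (Umat d U)) * det (Umat d U) = 1"
proof -
  let ?M = "Umat d U"
  have M: "?M \<in> carrier_mat d d" by (simp add: Umat_def)
  have C: "transpose_mat (map_mat cnj ?M) \<in> carrier_mat d d" by (simp add: Umat_def)
  have "transpose_mat (map_mat cnj ?M) * ?M = 1\<^sub>m d"
  proof (rule eq_matI)
    fix i j assume ij: "i < dim_row (1\<^sub>m d)" "j < dim_col (1\<^sub>m d)"
    then have "(\<Sum>k<d. cnj (U k i) * U k j) = (if i = j then 1 else 0)"
      using U unfolding unitary_mat_def by simp
    then show "(transpose_mat (map_mat cnj ?M) * ?M) $$ (i, j) = 1\<^sub>m d $$ (i, j)"
      using ij by (simp add: Umat_def scalar_prod_def atLeast0LessThan)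
  qed (simp_all add: Umat_def)
  then have "det (transpose_mat (map_mat cnj ?M)) * det ?M = 1"
    using det_mult[OF C M] by simp
  moreover have "det (transpose_mat (map_mat cnj ?M)) = cnj (det ?M)"
  proof -
    have "det (transpose_mat (map_mat cnj ?M)) = det (map_mat cnj ?M)"
      by (rule det_transpose[of _ d]) (simp add: Umat_def)
    also have "\<dots> = cnj (det ?M)"
      unfolding det_def by (simp add: Umat_def)
    finally show ?thesis .
  qed
  ultimately show ?thesis by simp
qed

lemma Kfact:
  assumes nd: "n \<le> d" and U: "unitary_mat d U" and i: "i \<in> tup d (d-n)" and k: "k \<in> tup d n"
  shows "mmul (tup d (d-n)) (tpow U) (A_op d n) i k = det (Umat d U) * mmul (tup d n) (A_op d n) (tpow (conj_mat U)) i k"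
proof -
  let ?T = "tup d n" and ?S = "tup d (d-n)"
  let ?W = "tpow U" and ?V = "tpow (conj_mat U)" and ?A = "A_op d n"
  have "(\<Sum>k''\<in>?T. mmul ?S ?W ?A i k'' * (if k'' = k then 1 else 0)) = (\<Sum>k''\<in>?T. if k'' = k then mmul ?S ?W ?A i k'' else 0)"
    by (rule sum.cong) auto
  also have "\<dots> = mmul ?S ?W ?A i k" using k by (simp add: sum.delta)
  finally have "mmul ?S ?W ?A i k = (\<Sum>k''\<in>?T. mmul ?S ?W ?A i k'' * (if k'' = k then 1 else 0))" by simp
  also have "\<dots> = (\<Sum>k''\<in>?T. mmul ?S ?W ?A i k'' * mmul ?T (adj ?V) ?V k'' k)"
    using VdV[OF U _ k] by (intro sum.cong refl) simp
  also have "\<dots> = mmul ?T (mmul ?S ?W ?A) (mmul ?T (adj ?V) ?V) i k"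
    by (simp add: mmul_def)
  also have "\<dots> = mmul ?T (mmul ?T (mmul ?S ?W ?A) (adj ?V)) ?V i k"
    by (simp add: mmul_assoc)
  also have "\<dots> = (\<Sum>k'\<in>?T. det (Umat d U) * ?A i k' * ?V k' k)"
    unfolding mmul_def[of ?T "mmul ?T (mmul ?S ?W ?A) (adj ?V)"]
    using K0[OF nd i] by (intro sum.cong refl) simp
  also have "\<dots> = det (Umat d U) * mmul ?T ?A ?V i k"
    by (simp add: mmul_def sum_distrib_left mult.assoc)
  finally show ?thesis .
qed



lemma sum_single:
  fixes f :: "nat \<Rightarrow> complex"
  assumes "l0 < r" "\<And>l. l < r \<Longrightarrow> l \<noteq> l0 \<Longrightarrow> f l = 0"
  shows "(\<Sum>l<r. f l) = f l0"
proof -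
  have "(\<Sum>l<r. f l) = f l0 + (\<Sum>l\<in>{..<r} - {l0}. f l)"
    by (rule sum.remove) (use assms(1) in simp_all)
  also have "(\<Sum>l\<in>{..<r} - {l0}. f l) = 0" using assms(2) by (intro sum.neutral) auto
  finally show ?thesis by simp
qed

lemma sum_delta_mult:
  fixes f :: "'a \<Rightarrow> complex"
  assumes "finite A" "b \<in> A"
  shows "(\<Sum>j\<in>A. f j * (if j = b then 1 else 0)) = f b"
proof -
  have "(\<Sum>j\<in>A. f j * (if j = b then 1 else 0)) = (\<Sum>j\<in>A. if j = b then f j else 0)"
    by (rule sum.cong) auto
  also have "\<dots> = f b" using assms by (simp add: sum.delta)
  finally show ?thesis .
qed

lemma mmul_cong_right:
  assumes "\<And>a. a \<in> A \<Longrightarrow> Y a c = Y' a c"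
  shows "mmul A X Y i c = mmul A X Y' i c"
  unfolding mmul_def using assms by (intro sum.cong refl) simp

lemma mmul_cong_left:
  assumes "\<And>a. a \<in> A \<Longrightarrow> X i a = X' i a"
  shows "mmul A X Y i c = mmul A X' Y i c"
  unfolding mmul_def using assms by (intro sum.cong refl) simp

lemma scal_pull:
  assumes Y: "\<And>a k. a \<in> I \<Longrightarrow> k \<in> T \<Longrightarrow> Y a k = s * Z a k" and b: "b \<in> I" and c: "c \<in> I"
  shows "mmul T (mmul T Y \<rho>) (adj Y) b c = (s * cnj s) * mmul T (mmul T Z \<rho>) (adj Z) b c"
proof -
  have "mmul T (mmul T Y \<rho>) (adj Y) b c = (\<Sum>k\<in>T. (\<Sum>k'\<in>T. Y b k' * \<rho> k' k) * cnj (Y c k))"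
    by (simp add: mmul_def adj_def)
  also have "\<dots> = (\<Sum>k\<in>T. (s * cnj s) * ((\<Sum>k'\<in>T. Z b k' * \<rho> k' k) * cnj (Z c k)))"
  proof (rule sum.cong[OF refl])
    fix k assume k: "k \<in> T"
    have "(\<Sum>k'\<in>T. Y b k' * \<rho> k' k) = s * (\<Sum>k'\<in>T. Z b k' * \<rho> k' k)"
      unfolding sum_distrib_left using Y[OF b] by (intro sum.cong refl) (simp add: mult.assoc)
    moreover have "cnj (Y c k) = cnj s * cnj (Z c k)" using Y[OF c k] by simp
    ultimately show "(\<Sum>k'\<in>T. Y b k' * \<rho> k' k) * cnj (Y c k) = (s * cnj s) * ((\<Sum>k'\<in>T. Z b k' * \<rho> k' k) * cnj (Z c k))"
      by (simp add: ac_simps)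
  qed
  also have "\<dots> = (s * cnj s) * mmul T (mmul T Z \<rho>) (adj Z) b c"
    by (simp add: mmul_def adj_def sum_distrib_left)
  finally show ?thesis .
qed

lemma AdA:
  assumes nd: "n \<le> d" and ay: "antisym_vec d n y" and i: "i \<in> tup d n"
  shows "(\<Sum>b\<in>tup d (d-n). adj (A_op d n) i b * (\<Sum>k\<in>tup d n. A_op d n b k * y k)) = y i"
proof -
  have "(\<Sum>b\<in>tup d (d-n). adj (A_op d n) i b * (\<Sum>k\<in>tup d n. A_op d n b k * y k))
      = (\<Sum>b\<in>tup d (d-n). \<Sum>k\<in>tup d n. adj (A_op d n) i b * A_op d n b k * y k)"
    by (simp add: sum_distrib_left mult.assoc)
  also have "\<dots> = (\<Sum>k\<in>tup d n. \<Sum>b\<in>tup d (d-n). adj (A_op d n) i b * A_op d n b k * y k)"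
    by (rule sum.swap)
  also have "\<dots> = (\<Sum>k\<in>tup d n. mmul (tup d (d-n)) (adj (A_op d n)) (A_op d n) i k * y k)"
    unfolding mmul_def sum_distrib_right by simp
  also have "\<dots> = y i" by (rule N1[OF nd ay i])
  finally show ?thesis .
qed

lemma herm_conj:
  assumes fin: "finite T" and h: "\<forall>a\<in>T. \<forall>b\<in>T. \<rho> a b = cnj (\<rho> b a)"
  shows "mmul T (mmul T V \<rho>) (adj V) i k = cnj (mmul T (mmul T V \<rho>) (adj V) k i)"
proof -
  have "cnj (mmul T (mmul T V \<rho>) (adj V) k i) = (\<Sum>b\<in>T. \<Sum>a\<in>T. cnj (V k a) * cnj (\<rho> a b) * V i b)"
    unfolding mmul_def adj_def by (simp add: sum_distrib_right)
  also have "\<dots> = (\<Sum>b\<in>T. \<Sum>a\<in>T. V i b * \<rho> b a * cnj (V k a))"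
  proof -
    have hh: "cnj (\<rho> a b) = \<rho> b a" if "a \<in> T" "b \<in> T" for a b
      using h that by (metis complex_cnj_cnj)
    show ?thesis by (intro sum.cong refl) (simp add: hh ac_simps)
  qed
  also have "\<dots> = mmul T (mmul T V \<rho>) (adj V) i k"
    unfolding mmul_def adj_def by (subst sum.swap) (simp add: sum_distrib_right)
  finally show ?thesis by simp
qed

theorem theorem1:
  fixes d n :: nat and E D :: "qop \<Rightarrow> qop" and U :: "nat \<Rightarrow> nat \<Rightarrow> complex" and \<rho> :: qop
  assumes "n \<le> d"
    and "cptp_with_kraus (tup d n) (tup d (d - n)) E (A_op d n)"
    and "cptp_with_kraus (tup d (d - n)) (tup d n) D (adj (A_op d n))"
    and "unitary_mat d U"
    and "density_op d n \<rho>"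
    and "supported_on_antisym d n \<rho>"
  shows "\<forall>i\<in>tup d n. \<forall>j\<in>tup d n.
           D (mmul (tup d (d - n)) (mmul (tup d (d - n)) (tpow U) (E \<rho>)) (adj (tpow U))) i j
         = mmul (tup d n) (mmul (tup d n) (tpow (conj_mat U)) \<rho>) (adj (tpow (conj_mat U))) i j"
proof -
  let ?T = "tup d n" and ?S = "tup d (d - n)"
  let ?A = "A_op d n" and ?W = "tpow U" and ?V = "tpow (conj_mat U)"
  note nd = assms(1) and U = assms(4)
  define \<delta> where "\<delta> = det (Umat d U)"
  define \<tau> where "\<tau> = mmul ?T (mmul ?T ?V \<rho>) (adj ?V)"
  define \<sigma> where "\<sigma> = mmul ?S (mmul ?S ?W (E \<rho>)) (adj ?W)"
  have fT: "finite ?T" and fS: "finite ?S" by simp_all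
  obtain K r l0 where krE: "kraus_rep ?T ?S K r E" and l0: "l0 < r"
    and Kl0: "\<forall>i\<in>?S. \<forall>a\<in>?T. K l0 i a = ?A i a"
    using assms(2) unfolding cptp_with_kraus_def by blast
  obtain L r' m0 where krD: "kraus_rep ?S ?T L r' D" and m0: "m0 < r'"
    and Lm0: "\<forall>i\<in>?T. \<forall>a\<in>?S. L m0 i a = adj ?A i a"
    using assms(3) unfolding cptp_with_kraus_def by blast
  have col: "antisym_vec d n (\<lambda>k. mmul ?T \<rho> X k c)" for X c
  proof -
    have "antisym_vec d n (apply_op ?T \<rho> (\<lambda>b. X b c))"
      using assms(6) unfolding supported_on_antisym_def by blast
    moreover have "apply_op ?T \<rho> (\<lambda>b. X b c) = (\<lambda>k. mmul ?T \<rho> X k c)"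
      unfolding apply_op_def mmul_def by simp
    ultimately show ?thesis by simp
  qed
  have herm: "\<forall>a\<in>?T. \<forall>b\<in>?T. \<rho> a b = cnj (\<rho> b a)" using density_herm[OF assms(5)] by blast
  have kr1E: "\<forall>a\<in>?T. \<forall>b\<in>?T. (\<Sum>l<r. mmul ?S (adj (K l)) (K l) a b) = (if a = b then 1 else 0)"
    using krE unfolding kraus_rep_def by blast
  have kr1D: "\<forall>a\<in>?S. \<forall>b\<in>?S. (\<Sum>l<r'. mmul ?T (adj (L l)) (L l) a b) = (if a = b then 1 else 0)"
    using krD unfolding kraus_rep_def by blast

  have R1: "E \<rho> i j = mmul ?T (mmul ?T ?A \<rho>) (adj ?A) i j" if ij: "i \<in> ?S" "j \<in> ?S" for i j
  proof -
    have Eeq: "E \<rho> i j = (\<Sum>l<r. mmul ?T (mmul ?T (K l) \<rho>) (adj (K l)) i j)"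
      using krE ij unfolding kraus_rep_def by blast
    have z: "mmul ?T (mmul ?T (K l) \<rho>) (adj (K l)) i j = 0" if l: "l < r" "l \<noteq> l0" for l
    proof -
      have "mmul ?T (K l) \<rho> i b = 0" if b: "b \<in> ?T" for b
      proof -
        define x where "x = (\<lambda>a. \<rho> a b)"
        have "x = (\<lambda>a. mmul ?T \<rho> (\<lambda>a c. if a = c then 1 else 0) a b)"
          unfolding x_def mmul_def using sum_delta_mult[OF fT b] by simp
        then have ax: "antisym_vec d n x" using col by simp
        have "(\<Sum>a\<in>?T. K l i a * x a) = 0"
          by (rule kill[OF fT fS kr1E l0 Kl0 normA[OF nd ax] l ij(1)])
        then show ?thesis by (simp add: mmul_def x_def)
      qed
      then show ?thesis by (simp add: mmul_def)
    qed
    have "E \<rho> i j = mmul ?T (mmul ?T (K l0) \<rho>) (adj (K l0)) i j"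
      unfolding Eeq by (rule sum_single[OF l0 z])
    also have "\<dots> = mmul ?T (mmul ?T ?A \<rho>) (adj ?A) i j"
      unfolding mmul_def adj_def using Kl0 ij by (simp cong: sum.cong)
    finally show ?thesis .
  qed

  have R2: "\<sigma> b c = mmul ?T ?A (mmul ?T \<tau> (adj ?A)) b c" if bc: "b \<in> ?S" "c \<in> ?S" for b c
  proof -
    let ?M = "mmul ?T (mmul ?T ?A \<rho>) (adj ?A)"
    let ?Y = "mmul ?S ?W ?A" and ?Z = "mmul ?T ?A ?V"
    have "\<sigma> b c = mmul ?S (mmul ?S ?W ?M) (adj ?W) b c"
      unfolding \<sigma>_def
    proof (rule mmul_cong_left)
      fix x assume "x \<in> ?S"
      then show "mmul ?S ?W (E \<rho>) b x = mmul ?S ?W ?M b x"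
        using R1 by (intro mmul_cong_right) simp
    qed
    also have "mmul ?S (mmul ?S ?W ?M) (adj ?W) = mmul ?T (mmul ?T ?Y \<rho>) (adj ?Y)"
      by (simp add: mmul_assoc adj_mmul)
    also have "mmul ?T (mmul ?T ?Y \<rho>) (adj ?Y) b c = (\<delta> * cnj \<delta>) * mmul ?T (mmul ?T ?Z \<rho>) (adj ?Z) b c"
      by (rule scal_pull[OF _ bc]) (use Kfact[OF nd U] in \<open>simp add: \<delta>_def\<close>)
    also have "\<delta> * cnj \<delta> = 1" unfolding \<delta>_def using det_unit[OF U] by (simp add: mult.commute)
    finally show ?thesis unfolding \<tau>_def by (simp add: mmul_assoc adj_mmul)
  qed
  define y where "y c = (\<lambda>k. mmul ?T \<tau> (adj ?A) k c)" for c
  have ay: "antisym_vec d n (y c)" for c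
  proof -
    have e: "mmul ?T \<tau> (adj ?A) = mmul ?T ?V (mmul ?T \<rho> (mmul ?T (adj ?V) (adj ?A)))"
      unfolding \<tau>_def by (simp add: mmul_assoc)
    have "y c = apply_op ?T ?V (\<lambda>k'. mmul ?T \<rho> (mmul ?T (adj ?V) (adj ?A)) k' c)"
      unfolding y_def e apply_op_def mmul_def[of _ ?V] ..
    then show ?thesis using antisym_tpow[OF col] by simp
  qed
  have atau: "antisym_vec d n (\<lambda>k. \<tau> k c)" for c
  proof -
    have e: "\<tau> = mmul ?T ?V (mmul ?T \<rho> (adj ?V))"
      unfolding \<tau>_def by (simp add: mmul_assoc)
    have "(\<lambda>k. \<tau> k c) = apply_op ?T ?V (\<lambda>k'. mmul ?T \<rho> (adj ?V) k' c)"
      unfolding e apply_op_def mmul_def[of _ ?V] ..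
    then show ?thesis using antisym_tpow[OF col] by simp
  qed
  have tauh: "\<tau> i k = cnj (\<tau> k i)" for i k
    unfolding \<tau>_def by (rule herm_conj[OF fT herm])
  have sig: "\<sigma> b c = (\<Sum>k\<in>?T. ?A b k * y c k)" if "b \<in> ?S" "c \<in> ?S" for b c
    using R2[OF that] unfolding y_def mmul_def[of ?T ?A] by simp

  show ?thesis
  proof (intro ballI)
    fix i j assume i: "i \<in> ?T" and j: "j \<in> ?T"
    have Deq: "D \<sigma> i j = (\<Sum>m<r'. mmul ?S (mmul ?S (L m) \<sigma>) (adj (L m)) i j)"
      using krD i j unfolding kraus_rep_def by blast
    have z: "mmul ?S (mmul ?S (L m) \<sigma>) (adj (L m)) i j = 0" if m: "m < r'" "m \<noteq> m0" for m
    proof -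
      have "mmul ?S (L m) \<sigma> i c = 0" if c: "c \<in> ?S" for c
      proof -
        define z where "z = (\<lambda>b. \<Sum>k\<in>?T. ?A b k * y c k)"
        have nrm: "(\<Sum>i\<in>?T. cnj (\<Sum>b\<in>?S. adj ?A i b * z b) * (\<Sum>b\<in>?S. adj ?A i b * z b))
            = (\<Sum>b\<in>?S. cnj (z b) * z b)"
        proof -
          have "(\<Sum>i\<in>?T. cnj (\<Sum>b\<in>?S. adj ?A i b * z b) * (\<Sum>b\<in>?S. adj ?A i b * z b))
              = (\<Sum>i\<in>?T. cnj (y c i) * y c i)"
            unfolding z_def using AdA[OF nd ay] by simp
          also have "\<dots> = (\<Sum>b\<in>?S. cnj (z b) * z b)"
            unfolding z_def by (rule normA[OF nd ay, symmetric])
          finally show ?thesis .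
        qed
        have "(\<Sum>b\<in>?S. L m i b * z b) = 0"
          by (rule kill[OF fS fT kr1D m0 Lm0 nrm m i])
        moreover have "mmul ?S (L m) \<sigma> i c = (\<Sum>b\<in>?S. L m i b * z b)"
          unfolding mmul_def z_def using sig c by simp
        ultimately show ?thesis by simp
      qed
      then show ?thesis by (simp add: mmul_def)
    qed
    have "D \<sigma> i j = mmul ?S (mmul ?S (L m0) \<sigma>) (adj (L m0)) i j"
      unfolding Deq by (rule sum_single[OF m0 z])
    also have "\<dots> = (\<Sum>c\<in>?S. (\<Sum>b\<in>?S. adj ?A i b * \<sigma> b c) * ?A c j)"
      unfolding mmul_def adj_def using Lm0 i j by (simp add: adj_def cong: sum.cong)
    also have "\<dots> = (\<Sum>c\<in>?S. y c i * ?A c j)"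
      using sig AdA[OF nd ay i] by (simp cong: sum.cong)
    also have "\<dots> = (\<Sum>c\<in>?S. \<Sum>k\<in>?T. \<tau> i k * cnj (?A c k) * ?A c j)"
      unfolding y_def mmul_def adj_def sum_distrib_right by simp
    also have "\<dots> = (\<Sum>k\<in>?T. \<tau> i k * mmul ?S (adj ?A) ?A k j)"
      unfolding mmul_def adj_def sum_distrib_left by (subst sum.swap) (simp add: mult.assoc)
    also have "\<dots> = cnj (\<Sum>k\<in>?T. mmul ?S (adj ?A) ?A j k * \<tau> k i)"
    proof -
      have tk: "cnj (\<tau> k i) = \<tau> i k" for k using tauh[of i k] by simp
      show ?thesis unfolding mmul_def adj_def by (simp add: tk ac_simps)
    qed
    also have "(\<Sum>k\<in>?T. mmul ?S (adj ?A) ?A j k * \<tau> k i) = \<tau> j i"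
      by (rule N1[OF nd atau j])
    also have "cnj (\<tau> j i) = \<tau> i j" using tauh[of i j] by simp
    finally have fin: "D \<sigma> i j = \<tau> i j" .
    then show "D (mmul ?S (mmul ?S ?W (E \<rho>)) (adj ?W)) i j = mmul ?T (mmul ?T ?V \<rho>) (adj ?V) i j"
      unfolding \<sigma>_def \<tau>_def .
  qed
qed


end
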